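(* Let $f:\mathbb{R}\to\mathbb{R}_{\geq 0}$ be a probability density function that is monotonically non-increasing on $\mathbb{R}_{\geq 0}$ and satisfies $\int_0^\infty f(t)\,dt = \frac{1}{2}$. For $x \geq 0$ define $$\alpha(x) := 4 \int_0^x f(t)\,dt \int_x^\infty t f(t)\,dt - \frac{x}{2} + 2x\left(\int_0^x f(t)\,dt\right)^2.$$ Then $\alpha(x) \geq 0$ for every $x \geq 0$. If $f$ is strictly decreasing on $\mathbb{R}_{\geq 0}$, then $\alpha(x) > 0$ for every $x > 0$. Moreover, $\alpha(x) = 0$ for all $x \geq 0$ if and only if there is $a > 0$ such that $f(t) = \frac{1}{2a}$ for $0 \leq t \leq a$ and $f(t) = 0$ for $t > a$. *)

theory Defs
  imports "HOL-Analysis.Analysis"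
begin

definition cdf0 :: "(real \<Rightarrow> real) \<Rightarrow> real \<Rightarrow> real" where
  "cdf0 f x = (LBINT t:{0..x}. f t)"

text \<open>alpha(x), valued in the extended reals since the tail moment
  integral of t f(t) over [x,oo) may be infinite.\<close>
definition alpha :: "(real \<Rightarrow> real) \<Rightarrow> real \<Rightarrow> ereal" where
  "alpha f x =
     ereal (4 * cdf0 f x) * enn2ereal (\<integral>\<^sup>+ t\<in>{x..}. ennreal (t * f t) \<partial>lborel)
     - ereal (x / 2) + ereal (2 * x * (cdf0 f x)\<^sup>2)"

end

theory Submission
  imports Defs
begin

context
  fixes f :: "real \<Rightarrow> real"
  assumes meas: "f \<in> borel_measurable borel"
    and nonneg: "\<And>t. f t \<ge> 0"
    and intg: "integrable lborel f"
    and mono: "\<And>s t. 0 \<le> s \<Longrightarrow> s \<le> t \<Longrightarrow> f t \<le> f s"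
begin

lemma si: "A \<in> sets borel \<Longrightarrow> set_integrable lborel A f"
  unfolding set_integrable_def by (rule integrable_mult_indicator) (auto simp: intg)

lemma si_nonneg: "A \<in> sets borel \<Longrightarrow> (LBINT t:A. f t) \<ge> 0"
  unfolding set_lebesgue_integral_def using nonneg
  by (intro integral_nonneg_AE) (auto simp: indicator_def)

lemma Icc_bounds:
  assumes "0 \<le> x" "x \<le> y"
  shows "(y-x) * f y \<le> (LBINT t:{x..y}. f t)" "(LBINT t:{x..y}. f t) \<le> (y-x) * f x"
proof -
  have c: "(LBINT t:{x..y}. (c::real)) = (y - x) * c" for c
    using assms by (subst set_integral_const) auto
  have ci: "set_integrable lborel {x..y} (\<lambda>t. c::real)" for c
    unfolding set_integrable_def using borel_integrable_atLeastAtMost[of x y "\<lambda>t. c"]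
    by (simp add: mult.commute)
  show "(y-x) * f y \<le> (LBINT t:{x..y}. f t)"
    using set_integral_mono[OF ci si[of "{x..y}"], of "f y"] mono assms c by auto
  show "(LBINT t:{x..y}. f t) \<le> (y-x) * f x"
    using set_integral_mono[OF si[of "{x..y}"] ci, of "f x"] mono assms c by auto
qed

lemma Ioc_bounds:
  assumes "0 \<le> x" "x \<le> y"
  shows "(y-x) * f y \<le> (LBINT t:{x<..y}. f t)" "(LBINT t:{x<..y}. f t) \<le> (y-x) * f x"
proof -
  have c: "(LBINT t:{x<..y}. (c::real)) = (y - x) * c" for c
    using assms by (subst set_integral_const) auto
  have ci: "set_integrable lborel {x<..y} (\<lambda>t. c::real)" for c
  proof (rule set_integrable_subset)
    show "set_integrable lborel {x..y} (\<lambda>t. c::real)"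
      unfolding set_integrable_def using borel_integrable_atLeastAtMost[of x y "\<lambda>t. c"]
      by (simp add: mult.commute)
  qed auto
  show "(y-x) * f y \<le> (LBINT t:{x<..y}. f t)"
    using set_integral_mono[OF ci si[of "{x<..y}"], of "f y"] mono assms c by auto
  show "(LBINT t:{x<..y}. f t) \<le> (y-x) * f x"
    using set_integral_mono[OF si[of "{x<..y}"] ci, of "f x"] mono assms c by auto
qed

lemma split_Icc:
  assumes "a \<le> b" "b \<le> c"
  shows "(LBINT t:{a..c}. f t) = (LBINT t:{a..b}. f t) + (LBINT t:{b<..c}. f t)"
proof -
  have "{a..c} = {a..b} \<union> {b<..c}" using assms by auto
  then show ?thesis by (metis set_integral_Un si atLeastAtMost_borel greaterThanAtMost_borel greaterThan_borel disjoint_iff greaterThanAtMost_iff atLeastAtMost_iff greaterThan_iff not_le)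
qed

lemma split_Ici:
  assumes "a \<le> b"
  shows "(LBINT t:{a..}. f t) = (LBINT t:{a..b}. f t) + (LBINT t:{b<..}. f t)"
proof -
  have "{a..} = {a..b} \<union> {b<..}" using assms by auto
  then show ?thesis by (metis set_integral_Un si atLeastAtMost_borel greaterThanAtMost_borel greaterThan_borel disjoint_iff greaterThanAtMost_iff atLeastAtMost_iff greaterThan_iff not_le)
qed

lemma split_Ioi:
  assumes "a \<le> b"
  shows "(LBINT t:{a<..}. f t) = (LBINT t:{a<..b}. f t) + (LBINT t:{b<..}. f t)"
proof -
  have "{a<..} = {a<..b} \<union> {b<..}" using assms by auto
  then show ?thesis by (metis set_integral_Un si atLeastAtMost_borel greaterThanAtMost_borel greaterThan_borel disjoint_iff greaterThanAtMost_iff atLeastAtMost_iff greaterThan_iff not_le)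
qed

lemma tail_pos:
  assumes "0 \<le> x" "x < y" "f y > 0"
  shows "(LBINT t:{x<..}. f t) > 0"
proof -
  have "(LBINT t:{x<..}. f t) = (LBINT t:{x<..y}. f t) + (LBINT t:{y<..}. f t)"
    using split_Ioi assms by simp
  moreover have "(y-x) * f y \<le> (LBINT t:{x<..y}. f t)" using Ioc_bounds assms by simp
  moreover have "(LBINT t:{y<..}. f t) \<ge> 0" by (rule si_nonneg) simp
  moreover have "(y-x) * f y > 0" using assms by simp
  ultimately show ?thesis by linarith
qed

lemma tail_zero:
  assumes "0 \<le> x" "f x = 0"
  shows "(LBINT t:{x<..}. f t) = 0"
proof -
  have "(LBINT t:{x<..}. f t) = (LBINT t:{x<..}. (0::real))"
    using assms mono nonneg by (intro set_lebesgue_integral_cong) (auto, metis less_imp_le order.antisym)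
  then show ?thesis by (simp add: set_lebesgue_integral_def)
qed

lemma nn_tail: "(\<integral>\<^sup>+ t. ennreal (f t) * indicator A t \<partial>lborel) = ennreal (LBINT t:A. f t)"
  if "A \<in> sets borel" for A
  using nn_set_integral_eq_set_integral[OF intg, of A] nonneg that by simp

lemma G_bound:
  assumes x: "0 \<le> x" and c: "f x > 0"
  defines "T \<equiv> (LBINT t:{x<..}. f t)"
  shows "ennreal (x * T + T\<^sup>2 / (2 * f x)) \<le> (\<integral>\<^sup>+ t\<in>{x..}. ennreal (t * f t) \<partial>lborel)"
proof -
  define cc where "cc = f x"
  have cc: "cc > 0" using c cc_def by simp
  have T0: "T \<ge> 0" unfolding T_def by (rule si_nonneg) simp
  define s where "s = x + T / cc"
  have s: "s \<ge> x" using T0 cc s_def by simp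
  have hT: "(\<integral>\<^sup>+ t. ennreal (f t) * indicator {x<..} t \<partial>lborel) = ennreal T"
    unfolding T_def by (rule nn_tail) simp
  have h1: "(\<integral>\<^sup>+ t. ennreal (s * f t) * indicator {x<..} t \<partial>lborel) = ennreal (s * T)"
  proof -
    have "(\<integral>\<^sup>+ t. ennreal (s * f t) * indicator {x<..} t \<partial>lborel)
        = (\<integral>\<^sup>+ t. ennreal s * (ennreal (f t) * indicator {x<..} t) \<partial>lborel)"
      using s x nonneg by (intro nn_integral_cong) (simp add: ennreal_mult mult.assoc)
    also have "\<dots> = ennreal s * ennreal T"
      using hT meas by (subst nn_integral_cmult) auto
    also have "\<dots> = ennreal (s * T)" using s x T0 by (simp add: ennreal_mult)
    finally show ?thesis .
  qed
  have h2: "(\<integral>\<^sup>+ t. ennreal (cc * (s - t)) * indicator {x..s} t \<partial>lborel) = ennreal (T\<^sup>2 / (2 * cc))"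
  proof -
    have i1: "((\<lambda>t. cc * s) has_integral (cc * s * (s - x))) {x..s}"
      using has_integral_const_real[of "cc * s" x s] s by (simp add: mult.commute)
    have i2: "((\<lambda>t. cc * t) has_integral (cc * ((s\<^sup>2 - x\<^sup>2)/2))) {x..s}"
      using has_integral_mult_right[OF ident_has_integral[OF s], of cc] by simp
    have "((\<lambda>t. cc * s - cc * t) has_integral (cc * s * (s - x) - cc * ((s\<^sup>2 - x\<^sup>2)/2))) {x..s}"
      by (rule has_integral_diff[OF i1 i2])
    moreover have "cc * s * (s - x) - cc * ((s\<^sup>2 - x\<^sup>2)/2) = T\<^sup>2 / (2 * cc)"
      using cc unfolding s_def by (simp add: field_simps power2_eq_square)
    ultimately have "((\<lambda>t. cc * (s - t)) has_integral T\<^sup>2 / (2 * cc)) {x..s}"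
      by (simp add: right_diff_distrib)
    then show ?thesis
      using nn_integral_has_integral_lebesgue'[of "{x..s}" "\<lambda>t. cc * (s - t)"] cc by auto
  qed
  have h3: "(\<integral>\<^sup>+ t. ennreal (s * f t) * indicator {x<..} t \<partial>lborel)
     \<le> (\<integral>\<^sup>+ t. ennreal (t * f t) * indicator {x..} t + ennreal (cc * (s - t)) * indicator {x..s} t \<partial>lborel)"
  proof (rule nn_integral_mono)
    fix t
    show "ennreal (s * f t) * indicator {x<..} t
       \<le> ennreal (t * f t) * indicator {x..} t + ennreal (cc * (s - t)) * indicator {x..s} t"
    proof (cases "t > x")
      case True
      have ft: "f t \<le> cc" using mono[of x t] True x cc_def by simp
      show ?thesis
      proof (cases "t \<le> s")
        case True2: True
        have "s * f t \<le> t * f t + cc * (s - t)"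
        proof -
          have "(s - t) * f t \<le> (s - t) * cc" using True2 ft by (intro mult_left_mono) auto
          then show ?thesis by (simp add: algebra_simps)
        qed
        then have "ennreal (s * f t) \<le> ennreal (t * f t) + ennreal (cc * (s - t))"
        proof -
          have "ennreal (t * f t) + ennreal (cc * (s - t)) = ennreal (t * f t + cc * (s - t))"
            using True True2 x nonneg[of t] cc by (intro ennreal_plus[symmetric]) auto
          then show ?thesis using \<open>s * f t \<le> t * f t + cc * (s - t)\<close> by (metis ennreal_leI)
        qed
        then show ?thesis using True True2 by simp
      next
        case False
        have "s * f t \<le> t * f t" using False nonneg[of t] by (intro mult_right_mono) auto
        then have "ennreal (s * f t) \<le> ennreal (t * f t)" by (rule ennreal_leI)
        then show ?thesis using True False by (simp add: add_increasing2)
      qed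
    qed simp
  qed
  also have "\<dots> = (\<integral>\<^sup>+ t\<in>{x..}. ennreal (t * f t) \<partial>lborel) + ennreal (T\<^sup>2 / (2 * cc))"
    using meas by (subst nn_integral_add) (auto simp: h2)
  finally have "ennreal (x * T + T\<^sup>2 / (2 * cc)) + ennreal (T\<^sup>2 / (2 * cc))
      \<le> (\<integral>\<^sup>+ t\<in>{x..}. ennreal (t * f t) \<partial>lborel) + ennreal (T\<^sup>2 / (2 * cc))"
  proof -
    assume a: "(\<integral>\<^sup>+ t. ennreal (s * f t) * indicator {x<..} t \<partial>lborel)
        \<le> (\<integral>\<^sup>+ t\<in>{x..}. ennreal (t * f t) \<partial>lborel) + ennreal (T\<^sup>2 / (2 * cc))"
    have "ennreal (x * T + T\<^sup>2 / (2 * cc)) + ennreal (T\<^sup>2 / (2 * cc)) = ennreal (s * T)"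
      using cc x T0 unfolding s_def
      by (subst ennreal_plus[symmetric]) (auto simp: field_simps power2_eq_square)
    then show ?thesis using a h1 by metis
  qed
  then show ?thesis unfolding cc_def
    using ennreal_add_left_cancel_le[of "ennreal (T\<^sup>2 / (2 * f x))"] by (simp add: add.commute)
qed

lemma cdf0_ge: "0 \<le> x \<Longrightarrow> x * f x \<le> cdf0 f x"
  using Icc_bounds(1)[of 0 x] unfolding cdf0_def by simp

lemma alpha_bound:
  assumes x: "0 \<le> x"
    and hsum: "cdf0 f x + (LBINT t:{x<..}. f t) = 1/2"
    and Tpos: "(LBINT t:{x<..}. f t) > 0"
  shows "f x > 0" "ereal (2 * (LBINT t:{x<..}. f t)\<^sup>2 * (cdf0 f x - f x * x) / f x) \<le> alpha f x"
proof -
  define T where "T = (LBINT t:{x<..}. f t)"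
  define F where "F = cdf0 f x"
  define c where "c = f x"
  define G where "G = (\<integral>\<^sup>+ t\<in>{x..}. ennreal (t * f t) \<partial>lborel)"
  show c: "f x > 0"
  proof (rule ccontr)
    assume "\<not> f x > 0"
    then have "f x = 0" using nonneg[of x] by simp
    then show False using tail_zero[OF x] Tpos by simp
  qed
  have F0: "F \<ge> x * c" using cdf0_ge[OF x] F_def c_def by simp
  have Fnn: "F \<ge> 0" using F0 x c c_def by (metis mult_nonneg_nonneg less_imp_le order_trans)
  define g where "g = x * T + T\<^sup>2 / (2 * c)"
  have g0: "g \<ge> 0" using x Tpos c unfolding g_def T_def c_def by simp
  have gG: "ennreal g \<le> G" using G_bound[OF x c] unfolding g_def G_def T_def c_def .
  have "ereal g \<le> enn2ereal G" using gG g0 by (metis enn2ereal_ennreal less_eq_ennreal.rep_eq)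
  then have P: "ereal (4 * F * g) \<le> ereal (4 * F) * enn2ereal G"
    using Fnn by (metis ereal_mult_left_mono times_ereal.simps(1) ereal_less_eq(5) mult_nonneg_nonneg zero_le_numeral)
  have alg: "4 * F * g - x / 2 + 2 * x * F\<^sup>2 = 2 * T\<^sup>2 * (F - c * x) / c"
  proof -
    have FT: "F = 1/2 - T" using hsum F_def T_def by simp
    show ?thesis unfolding g_def FT using c c_def by (simp add: field_simps power2_eq_square)
  qed
  have "ereal (2 * T\<^sup>2 * (F - c * x) / c) \<le> ereal (4 * F) * enn2ereal G - ereal (x / 2) + ereal (2 * x * F\<^sup>2)"
  proof (cases "ereal (4 * F) * enn2ereal G")
    case (real p)
    then show ?thesis using P alg by simp
  next
    case PInf
    then show ?thesis by simp
  next
    case MInf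
    then show ?thesis using P by simp
  qed
  then show "ereal (2 * (LBINT t:{x<..}. f t)\<^sup>2 * (cdf0 f x - f x * x) / f x) \<le> alpha f x"
    unfolding alpha_def T_def F_def c_def G_def by simp
qed

lemma part12:
  assumes half: "(LBINT t:{0..}. f t) = 1/2"
  shows "(\<forall>x\<ge>0. alpha f x \<ge> 0)
    \<and> ((\<forall>s t. 0 \<le> s \<longrightarrow> s < t \<longrightarrow> f t < f s) \<longrightarrow> (\<forall>x>0. alpha f x > 0))"
proof -
  have hsum: "cdf0 f x + (LBINT t:{x<..}. f t) = 1/2" if "x \<ge> 0" for x
    using split_Ici[of 0 x] that half unfolding cdf0_def by simp
  have p1: "alpha f x \<ge> 0" if x: "x \<ge> 0" for x
  proof (cases "(LBINT t:{x<..}. f t) > 0")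
    case True
    note ab = alpha_bound[OF x hsum[OF x] True]
    have "0 \<le> 2 * (LBINT t:{x<..}. f t)\<^sup>2 * (cdf0 f x - f x * x) / f x"
      using ab(1) cdf0_ge[OF x] by (simp add: mult.commute)
    then show ?thesis using ab(2) by (metis order_trans zero_ereal_def ereal_less_eq(3))
  next
    case False
    then have T0: "(LBINT t:{x<..}. f t) = 0" using si_nonneg[of "{x<..}"] by simp
    then have F: "cdf0 f x = 1/2" using hsum[OF x] by simp
    show ?thesis unfolding alpha_def F
    proof (cases "ereal (4 * (1 / 2)) * enn2ereal (\<integral>\<^sup>+ t\<in>{x..}. ennreal (t * f t) \<partial>lborel)")
      case (real p)
      moreover have "p \<ge> 0" using real by (metis ereal_less_eq(5) enn2ereal_nonneg ereal_mult_left_mono mult_zero_right zero_ereal_def zero_le_numeral mult_nonneg_nonneg ereal_less_eq(3) divide_nonneg_nonneg zero_le_one times_ereal.simps(1))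
      ultimately show "0 \<le> ereal (4 * (1 / 2)) * enn2ereal (\<integral>\<^sup>+ t\<in>{x..}. ennreal (t * f t) \<partial>lborel) - ereal (x / 2) + ereal (2 * x * (1 / 2)\<^sup>2)"
        by (simp add: power2_eq_square)
    qed (auto simp: power2_eq_square)
  qed
  have p2: "alpha f x > 0" if strict: "\<forall>s t. 0 \<le> s \<longrightarrow> s < t \<longrightarrow> f t < f s" and x: "x > 0" for x
  proof -
    have "f (x+2) < f (x+1)" using strict x by auto
    then have "f (x+1) > 0" using nonneg[of "x+2"] by simp
    then have Tp: "(LBINT t:{x<..}. f t) > 0" using tail_pos[of x "x+1"] x by simp
    note ab = alpha_bound[OF _ hsum Tp] 
    have "cdf0 f x = (LBINT t:{0..x/2}. f t) + (LBINT t:{x/2<..x}. f t)"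
      unfolding cdf0_def using split_Icc[of 0 "x/2" x] x by simp
    moreover have "(LBINT t:{0..x/2}. f t) \<ge> (x/2) * f (x/2)" using Icc_bounds(1)[of 0 "x/2"] x by simp
    moreover have "(LBINT t:{x/2<..x}. f t) \<ge> (x/2) * f x" using Ioc_bounds(1)[of "x/2" x] x by simp
    moreover have "f (x/2) > f x" using strict x by auto
    moreover have "(x/2) * f (x/2) > (x/2) * f x" using calculation(4) x by simp
    ultimately have "cdf0 f x - f x * x > 0" by (simp add: field_simps)
    then have "0 < 2 * (LBINT t:{x<..}. f t)\<^sup>2 * (cdf0 f x - f x * x) / f x"
      using ab(1) Tp x by simp
    then show ?thesis using ab(2) x by (metis less_le_trans zero_ereal_def ereal_less(2) less_imp_le)
  qed
  show ?thesis using p1 p2 by blast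
qed

lemma part3_fwd:
  assumes half: "(LBINT t:{0..}. f t) = 1/2"
    and H: "\<forall>x\<ge>0. alpha f x = 0"
  shows "\<exists>a>0. AE t in lborel. t \<ge> 0 \<longrightarrow> f t = (if t \<le> a then 1 / (2 * a) else 0)"
proof -
  have hsum: "cdf0 f x + (LBINT t:{x<..}. f t) = 1/2" if "x \<ge> 0" for x
    using split_Ici[of 0 x] that half unfolding cdf0_def by simp
  define S where "S = {x. 0 \<le> x \<and> (\<exists>y>x. f y > 0)}"
  have cA: "cdf0 f x = x * f x" if xS: "x \<in> S" and xp: "x > 0" for x
  proof -
    obtain y where y: "y > x" "f y > 0" using xS unfolding S_def by auto
    have x: "x \<ge> 0" using xp by simp
    have Tp: "(LBINT t:{x<..}. f t) > 0" using tail_pos[OF x y] .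
    note ab = alpha_bound[OF x hsum[OF x] Tp]
    have "ereal (2 * (LBINT t:{x<..}. f t)\<^sup>2 * (cdf0 f x - f x * x) / f x) \<le> 0"
      using ab(2) H x by simp
    then have "2 * (LBINT t:{x<..}. f t)\<^sup>2 * (cdf0 f x - f x * x) / f x \<le> 0" by simp
    then have "cdf0 f x - f x * x \<le> 0" using ab(1) Tp
      by (simp add: divide_le_0_iff mult_le_0_iff)
    then show ?thesis using cdf0_ge[OF x] by (simp add: mult.commute)
  qed
  have cB: "f x = f y" if "x \<in> S" "y \<in> S" "0 < x" "x < y" for x y
  proof -
    have "cdf0 f y = cdf0 f x + (LBINT t:{x<..y}. f t)"
      unfolding cdf0_def using split_Icc[of 0 x y] that by simp
    moreover have "(LBINT t:{x<..y}. f t) \<ge> (y - x) * f y" using Ioc_bounds(1)[of x y] that by simp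
    ultimately have "y * f y \<ge> x * f x + (y - x) * f y" using cA that by simp
    then have "x * f y \<ge> x * f x" by (simp add: algebra_simps)
    then have "f y \<ge> f x" using that by simp
    moreover have "f y \<le> f x" using mono[of x y] that by simp
    ultimately show ?thesis by simp
  qed
  have "0 \<in> S"
  proof (rule ccontr)
    assume "0 \<notin> S"
    then have z: "f y = 0" if "y > 0" for y using S_def nonneg[of y] that by force
    have "(LBINT t:{0<..}. f t) = (LBINT t:{(0::real)<..}. (0::real))"
      by (rule set_lebesgue_integral_cong) (auto simp: z)
    then have T0: "(LBINT t:{0<..}. f t) = 0" by (simp add: set_lebesgue_integral_def)
    have "cdf0 f 0 \<le> 0" using Icc_bounds(2)[of 0 0] unfolding cdf0_def by simp
    moreover have "cdf0 f 0 \<ge> 0" using cdf0_ge[of 0] by simp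
    ultimately show False using hsum[of 0] T0 by simp
  qed
  then obtain y0 where y0: "y0 > 0" "f y0 > 0" using S_def by auto
  define x0 where "x0 = y0 / 2"
  have x0p: "x0 > 0" using y0 unfolding x0_def by simp
  have x0S: "x0 \<in> S" using y0 x0p unfolding S_def x0_def by (auto intro!: exI[of _ y0])
  define k where "k = f x0"
  have kp: "k > 0" using mono[of x0 y0] y0 x0p unfolding k_def x0_def by simp
  have fk: "f x = k" if xS: "x \<in> S" and xp: "x > 0" for x
  proof (cases x x0 rule: linorder_cases)
    case less
    then show ?thesis using cB[of x x0] xS xp x0S unfolding k_def by simp
  next
    case equal
    then show ?thesis unfolding k_def by simp
  next
    case greater
    then show ?thesis using cB[of x0 x] xS x0p x0S unfolding k_def by simp
  qed
  have bnd: "x \<le> 1 / (2 * k)" if "x \<in> S" for x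
  proof (cases "x > 0")
    case True
    have e1: "cdf0 f x = x * k" using cA[OF that True] fk[OF that True] by simp
    have e2: "cdf0 f x + (LBINT t:{x<..}. f t) = 1/2" using hsum[of x] True by simp
    have e3: "(LBINT t:{x<..}. f t) \<ge> 0" using si_nonneg[of "{x<..}"] by simp
    have "x * k \<le> 1/2" using e1 e2 e3 by linarith
    then show ?thesis using kp by (simp add: field_simps)
  next
    case False
    have "1 / (2 * k) > 0" using kp by simp
    then show ?thesis using False by linarith
  qed
  have bdd: "bdd_above S" using bnd by (rule bdd_aboveI)
  have Sne: "S \<noteq> {}" using x0S by auto
  define a where "a = Sup S"
  have x0a: "x0 \<le> a" unfolding a_def using x0S bdd by (rule cSup_upper)
  then have ap: "a > 0" using x0p by simp
  have zero_above: "f t = 0" if "t > a" for t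
  proof -
    define t' where "t' = (a + t) / 2"
    have "t' \<notin> S"
    proof
      assume "t' \<in> S"
      then have "t' \<le> a" unfolding a_def using bdd by (rule cSup_upper)
      then show False using that t'_def by simp
    qed
    moreover have "t' \<ge> 0" "t > t'" using ap that t'_def by auto
    ultimately have "\<not> (\<exists>y>t'. f y > 0)" unfolding S_def by blast
    then have "f t \<le> 0" using \<open>t > t'\<close> by (meson not_less)
    then show ?thesis using nonneg[of t] by simp
  qed
  have k_below: "f t = k" if t0: "0 < t" and ta: "t < a" for t
  proof -
    obtain x where "x \<in> S" "t < x" using ta less_cSup_iff[OF Sne bdd] a_def by auto
    then have "t \<in> S" using t0 unfolding S_def by (auto intro: less_trans)
    then show ?thesis using fk t0 by simp
  qed
  have AE2: "AE t in lborel. t \<noteq> 0 \<and> t \<noteq> a"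
    using eventually_conj[OF AE_lborel_singleton[of 0] AE_lborel_singleton[of a]] by simp
  have ka: "k * a = 1/2"
  proof -
    have "(LBINT t:{a<..}. f t) = (LBINT t:{a<..}. (0::real))"
      by (rule set_lebesgue_integral_cong) (auto simp: zero_above)
    then have T0: "(LBINT t:{a<..}. f t) = 0" by (simp add: set_lebesgue_integral_def)
    have "(LBINT t:{0..a}. f t) = (LBINT t:{0..a}. k)"
    proof (rule set_lebesgue_integral_cong_AE)
      show "AE x\<in>{0..a} in lborel. f x = k"
        using AE2 by eventually_elim (use k_below in auto)
    qed (auto simp: meas)
    also have "\<dots> = a * k" using ap by (subst set_integral_const) auto
    finally show ?thesis using split_Ici[of 0 a] ap half T0 by (simp add: mult.commute)
  qed
  have "AE t in lborel. t \<ge> 0 \<longrightarrow> f t = (if t \<le> a then 1 / (2 * a) else 0)"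
    using AE2
  proof eventually_elim
    case (elim t)
    show ?case
    proof
      assume "t \<ge> 0"
      have kk: "k = 1 / (2 * a)" using ka ap by (simp add: field_simps)
      show "f t = (if t \<le> a then 1 / (2 * a) else 0)"
      proof (cases "t \<le> a")
        case True
        then have "0 < t" "t < a" using elim \<open>t \<ge> 0\<close> by auto
        then show ?thesis using k_below kk True by simp
      next
        case False
        then show ?thesis using zero_above by simp
      qed
    qed
  qed
  then show ?thesis using ap by blast
qed

lemma part3_bwd:
  assumes half: "(LBINT t:{0..}. f t) = 1/2"
    and ap: "a > 0"
    and hA: "AE t in lborel. t \<ge> 0 \<longrightarrow> f t = (if t \<le> a then 1 / (2 * a) else 0)"
    and x: "x \<ge> 0"
  shows "alpha f x = 0"
proof -
  have hsum: "cdf0 f x + (LBINT t:{x<..}. f t) = 1/2"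
    using split_Ici[of 0 x] x half unfolding cdf0_def by simp
  show ?thesis
  proof (cases "x \<le> a")
    case False
    have "(LBINT t:{x<..}. f t) = (LBINT t:{x<..}. (0::real))"
    proof (rule set_lebesgue_integral_cong_AE)
      show "AE t\<in>{x<..} in lborel. f t = 0"
        using hA by eventually_elim (use False x in auto)
    qed (auto simp: meas)
    then have T0: "(LBINT t:{x<..}. f t) = 0" by (simp add: set_lebesgue_integral_def)
    have F: "cdf0 f x = 1/2" using hsum T0 by simp
    have G: "(\<integral>\<^sup>+ t\<in>{x..}. ennreal (t * f t) \<partial>lborel) = (\<integral>\<^sup>+ (t::real). 0 \<partial>lborel)"
    proof (rule nn_integral_cong_AE)
      show "AE t in lborel. ennreal (t * f t) * indicator {x..} t = 0"
        using eventually_conj[OF hA AE_lborel_singleton[of a]]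
        by eventually_elim (use False x in \<open>auto simp: indicator_def\<close>)
    qed
    show ?thesis unfolding alpha_def F G by (simp add: power2_eq_square zero_ennreal.rep_eq)
  next
    case True
    have "cdf0 f x = (LBINT t:{0..x}. 1 / (2 * a))" unfolding cdf0_def
    proof (rule set_lebesgue_integral_cong_AE)
      show "AE t\<in>{0..x} in lborel. f t = 1 / (2 * a)"
        using hA by eventually_elim (use True x in auto)
    qed (auto simp: meas)
    also have "\<dots> = x / (2 * a)" using x by (subst set_integral_const) auto
    finally have F: "cdf0 f x = x / (2 * a)" .
    have "(\<integral>\<^sup>+ t\<in>{x..}. ennreal (t * f t) \<partial>lborel)
        = (\<integral>\<^sup>+ t. ennreal (1 / (2 * a) * t) * indicator {x..a} t \<partial>lborel)"
    proof (rule nn_integral_cong_AE)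
      show "AE t in lborel. ennreal (t * f t) * indicator {x..} t = ennreal (1 / (2 * a) * t) * indicator {x..a} t"
        using hA by eventually_elim (use True x in \<open>auto simp: indicator_def\<close>)
    qed
    also have "\<dots> = ennreal (1 / (2 * a) * ((a\<^sup>2 - x\<^sup>2) / 2))"
    proof (rule nn_integral_has_integral_lebesgue')
      show "((\<lambda>t. 1 / (2 * a) * t) has_integral 1 / (2 * a) * ((a\<^sup>2 - x\<^sup>2) / 2)) {x..a}"
        by (rule has_integral_mult_right[OF ident_has_integral[OF True]])
    qed (use x ap in auto)
    finally have G: "(\<integral>\<^sup>+ t\<in>{x..}. ennreal (t * f t) \<partial>lborel) = ennreal (1 / (2 * a) * ((a\<^sup>2 - x\<^sup>2) / 2))" .
    have nn: "1 / (2 * a) * ((a\<^sup>2 - x\<^sup>2) / 2) \<ge> 0" using True x ap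
      by (intro mult_nonneg_nonneg) (auto simp: power_mono)
    have "4 * (x / (2 * a)) * (1 / (2 * a) * ((a\<^sup>2 - x\<^sup>2) / 2)) - x / 2 + 2 * x * (x / (2 * a))\<^sup>2 = 0"
      using ap by (simp add: field_simps power2_eq_square)
    then show ?thesis unfolding alpha_def F G using nn by simp
  qed
qed

end

theorem lemma2:
  fixes f :: "real \<Rightarrow> real"
  assumes meas: "f \<in> borel_measurable borel"
    and nonneg: "\<And>t. f t \<ge> 0"
    and density: "(\<integral>\<^sup>+ t. ennreal (f t) \<partial>lborel) = 1"
    and mono: "\<And>s t. 0 \<le> s \<Longrightarrow> s \<le> t \<Longrightarrow> f t \<le> f s"
    and half: "(\<integral>\<^sup>+ t\<in>{0..}. ennreal (f t) \<partial>lborel) = 1 / 2"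
  shows "(\<forall>x\<ge>0. alpha f x \<ge> 0)
    \<and> ((\<forall>s t. 0 \<le> s \<longrightarrow> s < t \<longrightarrow> f t < f s) \<longrightarrow> (\<forall>x>0. alpha f x > 0))
    \<and> ((\<forall>x\<ge>0. alpha f x = 0) \<longleftrightarrow>
        (\<exists>a>0. AE t in lborel. t \<ge> 0 \<longrightarrow> f t = (if t \<le> a then 1 / (2 * a) else 0)))"
proof -
  have intg: "integrable lborel f"
    by (rule integrableI_nn_integral_finite[where x=1]) (use meas nonneg density in auto)
  have "ennreal (LBINT t:{0..}. f t) = 1 / 2"
    using nn_tail[OF meas nonneg intg mono, of "{0..}"] half by simp
  then have hr: "(LBINT t:{0..}. f t) = 1 / 2"
  proof -
    have e: "(1::ennreal) / 2 = ennreal (1/2)"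
      using ennreal_divide_numeral[of 1 "num.Bit0 num.One"] by simp
    have "(LBINT t:{0..}. f t) \<ge> 0" using si_nonneg[OF meas nonneg intg mono, of "{0..}"] by simp
    then show ?thesis using \<open>ennreal (LBINT t:{0..}. f t) = 1 / 2\<close> unfolding e
      by (simp only: ennreal_inj)
  qed
  note P12 = part12[OF meas nonneg intg mono hr]
  have P3: "(\<forall>x\<ge>0. alpha f x = 0) \<longleftrightarrow>
        (\<exists>a>0. AE t in lborel. t \<ge> 0 \<longrightarrow> f t = (if t \<le> a then 1 / (2 * a) else 0))"
    using part3_fwd[OF meas nonneg intg mono hr] part3_bwd[OF meas nonneg intg mono hr] by blast
  show ?thesis using P12 P3 by blast
qed

end
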